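(* Let $\mathcal{C}$ and $\mathcal{C}'$ be semigroupal categories and let $(F,J)\colon \mathcal{C}\to\mathcal{C}'$ be a semigroupal equivalence. Then for any left (respectively right, respectively two-sided) ideal $\mathcal{I}$ of $\mathcal{C}$, the subcategory $\overline{F(\mathcal{I})}$ is a left (respectively right, respectively two-sided) ideal of $\mathcal{C}'$. Moreover, $F$ restricts to an equivalence of categories between $\mathcal{I}$ and $\overline{F(\mathcal{I})}$.
   Context: A semigroupal category is a category $\mathcal{C}$ with a tensor product functor $\otimes\colon\mathcal{C}\times\mathcal{C}\to\mathcal{C}$ and an associator natural isomorphism $a$ satisfying the pentagon axiom (no unit object is required); throughout, semigroupal categories may be taken strict. A semigroupal functor is a pair $(F,J)$ where $F\colon\mathcal{C}\to\mathcal{C}'$ is a functor and $J\colon F(-)\otimes' F(-)\Rightarrow F(-\otimes -)$ is a natural isomorphism compatible with the associators (hexagon axiom). A semigroupal equivalence is a semigroupal functor $(F,J)$ with $F$ an equivalence of categories (so $F$ is full and $F(\mathcal{I})$ is a subcategory). A subcategory $\mathcal{D}$ of $\mathcal{C}$ is closed under isomorphisms if for every object $X$ of $\mathcal{D}$ and every isomorphism $\varphi\colon X\to X'$ in $\mathcal{C}$, both $X'$ and $\varphi$ lie in $\mathcal{D}$; the isomorphism closure $\overline{\mathcal{D}}$ is the smallest subcategory of $\mathcal{C}$ containing $\mathcal{D}$ and closed under isomorphisms (its objects are those isomorphic to objects of $\mathcal{D}$, and a morphism $\varphi'\colon X'\to Y'$ lies in $\overline{\mathcal{D}}$ iff there are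 objects $X,Y$ of $\mathcal{D}$, isomorphisms $\mu\colon X\to X'$, $\nu\colon Y\to Y'$ in $\mathcal{C}$ and a morphism $\varphi\colon X\to Y$ in $\mathcal{D}$ with $\nu\circ\varphi=\varphi'\circ\mu$). A left (resp. right) ideal of a semigroupal category $\mathcal{C}$ is a subcategory $\mathcal{I}$ closed under isomorphisms such that $Y\otimes X$ (resp. $X\otimes Y$) is an object of $\mathcal{I}$ for all objects $X$ of $\mathcal{I}$ and $Y$ of $\mathcal{C}$; an ideal is a subcategory that is both a left and a right ideal. *)

theory Defs
  imports Main
begin

record ('o,'a) cat =
  Ob :: "'o set"
  Ar :: "'a set"
  Dom :: "'a \<Rightarrow> 'o"
  Cod :: "'a \<Rightarrow> 'o"
  Idt :: "'o \<Rightarrow> 'a"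
  Comp :: "'a \<Rightarrow> 'a \<Rightarrow> 'a"   (* Comp C g f = g \<circ> f *)

definition hom :: "('o,'a,'x) cat_scheme \<Rightarrow> 'o \<Rightarrow> 'o \<Rightarrow> 'a set" where
  "hom C x y = {f \<in> Ar C. Dom C f = x \<and> Cod C f = y}"

definition category :: "('o,'a,'x) cat_scheme \<Rightarrow> bool" where
  "category C \<longleftrightarrow>
     (\<forall>f\<in>Ar C. Dom C f \<in> Ob C \<and> Cod C f \<in> Ob C) \<and>
     (\<forall>x\<in>Ob C. Idt C x \<in> hom C x x) \<and>
     (\<forall>f\<in>Ar C. \<forall>g\<in>Ar C. Cod C f = Dom C g \<longrightarrow> Comp C g f \<in> hom C (Dom C f) (Cod C g)) \<and>
     (\<forall>f\<in>Ar C. Comp C f (Idt C (Dom C f)) = f \<and> Comp C (Idt C (Cod C f)) f = f) \<and>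
     (\<forall>f\<in>Ar C. \<forall>g\<in>Ar C. \<forall>h\<in>Ar C. Cod C f = Dom C g \<longrightarrow> Cod C g = Dom C h \<longrightarrow>
        Comp C h (Comp C g f) = Comp C (Comp C h g) f)"

definition iso :: "('o,'a,'x) cat_scheme \<Rightarrow> 'a \<Rightarrow> bool" where
  "iso C f \<longleftrightarrow> f \<in> Ar C \<and> (\<exists>g\<in>hom C (Cod C f) (Dom C f).
      Comp C g f = Idt C (Dom C f) \<and> Comp C f g = Idt C (Cod C f))"

definition cat_functor :: "('o,'a,'x) cat_scheme \<Rightarrow> ('p,'b,'y) cat_scheme \<Rightarrow>
    ('o \<Rightarrow> 'p) \<Rightarrow> ('a \<Rightarrow> 'b) \<Rightarrow> bool" where
  "cat_functor C D FO FA \<longleftrightarrow> category C \<and> category D \<and>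
     (\<forall>x\<in>Ob C. FO x \<in> Ob D) \<and>
     (\<forall>f\<in>Ar C. FA f \<in> hom D (FO (Dom C f)) (FO (Cod C f))) \<and>
     (\<forall>x\<in>Ob C. FA (Idt C x) = Idt D (FO x)) \<and>
     (\<forall>f\<in>Ar C. \<forall>g\<in>Ar C. Cod C f = Dom C g \<longrightarrow> FA (Comp C g f) = Comp D (FA g) (FA f))"

definition nat_iso :: "('o,'a,'x) cat_scheme \<Rightarrow> ('p,'b,'y) cat_scheme \<Rightarrow>
    ('o \<Rightarrow> 'p) \<Rightarrow> ('a \<Rightarrow> 'b) \<Rightarrow> ('o \<Rightarrow> 'p) \<Rightarrow> ('a \<Rightarrow> 'b) \<Rightarrow> ('o \<Rightarrow> 'b) \<Rightarrow> bool" where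
  "nat_iso C D F1O F1A F2O F2A \<eta> \<longleftrightarrow>
     cat_functor C D F1O F1A \<and> cat_functor C D F2O F2A \<and>
     (\<forall>x\<in>Ob C. \<eta> x \<in> hom D (F1O x) (F2O x) \<and> iso D (\<eta> x)) \<and>
     (\<forall>f\<in>Ar C. Comp D (\<eta> (Cod C f)) (F1A f) = Comp D (F2A f) (\<eta> (Dom C f)))"

definition cat_equivalence :: "('o,'a,'x) cat_scheme \<Rightarrow> ('p,'b,'y) cat_scheme \<Rightarrow>
    ('o \<Rightarrow> 'p) \<Rightarrow> ('a \<Rightarrow> 'b) \<Rightarrow> bool" where
  "cat_equivalence C D FO FA \<longleftrightarrow> cat_functor C D FO FA \<and>
     (\<exists>(GO :: 'p \<Rightarrow> 'o) (GA :: 'b \<Rightarrow> 'a) \<eta> \<epsilon>. cat_functor D C GO GA \<and>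
        nat_iso C C (\<lambda>x. x) (\<lambda>f. f) (GO \<circ> FO) (GA \<circ> FA) \<eta> \<and>
        nat_iso D D (FO \<circ> GO) (FA \<circ> GA) (\<lambda>x. x) (\<lambda>f. f) \<epsilon>)"

definition subcategory :: "('o,'a,'x) cat_scheme \<Rightarrow> 'o set \<times> 'a set \<Rightarrow> bool" where
  "subcategory C S \<longleftrightarrow> fst S \<subseteq> Ob C \<and> snd S \<subseteq> Ar C \<and>
     (\<forall>f\<in>snd S. Dom C f \<in> fst S \<and> Cod C f \<in> fst S) \<and>
     (\<forall>x\<in>fst S. Idt C x \<in> snd S) \<and>
     (\<forall>f\<in>snd S. \<forall>g\<in>snd S. Cod C f = Dom C g \<longrightarrow> Comp C g f \<in> snd S)"

definition restrict_cat :: "('o,'a,'x) cat_scheme \<Rightarrow> 'o set \<times> 'a set \<Rightarrow> ('o,'a,'x) cat_scheme" where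
  "restrict_cat C S = C\<lparr>Ob := fst S, Ar := snd S\<rparr>"

definition iso_closed :: "('o,'a,'x) cat_scheme \<Rightarrow> 'o set \<times> 'a set \<Rightarrow> bool" where
  "iso_closed C S \<longleftrightarrow> (\<forall>x\<in>fst S. \<forall>\<phi>. iso C \<phi> \<and> Dom C \<phi> = x \<longrightarrow> Cod C \<phi> \<in> fst S \<and> \<phi> \<in> snd S)"

definition iso_closure :: "('o,'a,'x) cat_scheme \<Rightarrow> 'o set \<times> 'a set \<Rightarrow> 'o set \<times> 'a set" where
  "iso_closure C D =
    (\<Inter>{fst E | E. subcategory C E \<and> iso_closed C E \<and> fst D \<subseteq> fst E \<and> snd D \<subseteq> snd E},
     \<Inter>{snd E | E. subcategory C E \<and> iso_closed C E \<and> fst D \<subseteq> fst E \<and> snd D \<subseteq> snd E})"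

definition image_subcat :: "('o \<Rightarrow> 'p) \<Rightarrow> ('a \<Rightarrow> 'b) \<Rightarrow> 'o set \<times> 'a set \<Rightarrow> 'p set \<times> 'b set" where
  "image_subcat FO FA S = (FO ` fst S, FA ` snd S)"

record ('o,'a) scat = "('o,'a) cat" +
  TensO :: "'o \<Rightarrow> 'o \<Rightarrow> 'o"
  TensA :: "'a \<Rightarrow> 'a \<Rightarrow> 'a"
  Assoc :: "'o \<Rightarrow> 'o \<Rightarrow> 'o \<Rightarrow> 'a"   (* a_{x,y,z} : (x*y)*z -> x*(y*z) *)

definition semigroupal_category :: "('o,'a,'x) scat_scheme \<Rightarrow> bool" where
  "semigroupal_category C \<longleftrightarrow> category C \<and>
     \<comment> \<open>tensor is a bifunctor\<close>
     (\<forall>x\<in>Ob C. \<forall>y\<in>Ob C. TensO C x y \<in> Ob C) \<and>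
     (\<forall>f\<in>Ar C. \<forall>g\<in>Ar C. TensA C f g \<in>
        hom C (TensO C (Dom C f) (Dom C g)) (TensO C (Cod C f) (Cod C g))) \<and>
     (\<forall>x\<in>Ob C. \<forall>y\<in>Ob C. TensA C (Idt C x) (Idt C y) = Idt C (TensO C x y)) \<and>
     (\<forall>f\<in>Ar C. \<forall>g\<in>Ar C. \<forall>f'\<in>Ar C. \<forall>g'\<in>Ar C. Cod C f = Dom C g \<longrightarrow> Cod C f' = Dom C g' \<longrightarrow>
        TensA C (Comp C g f) (Comp C g' f') = Comp C (TensA C g g') (TensA C f f')) \<and>
     \<comment> \<open>associator is a natural isomorphism\<close>
     (\<forall>x\<in>Ob C. \<forall>y\<in>Ob C. \<forall>z\<in>Ob C.
        Assoc C x y z \<in> hom C (TensO C (TensO C x y) z) (TensO C x (TensO C y z)) \<and>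
        iso C (Assoc C x y z)) \<and>
     (\<forall>f\<in>Ar C. \<forall>g\<in>Ar C. \<forall>h\<in>Ar C.
        Comp C (Assoc C (Cod C f) (Cod C g) (Cod C h)) (TensA C (TensA C f g) h) =
        Comp C (TensA C f (TensA C g h)) (Assoc C (Dom C f) (Dom C g) (Dom C h))) \<and>
     \<comment> \<open>pentagon\<close>
     (\<forall>w\<in>Ob C. \<forall>x\<in>Ob C. \<forall>y\<in>Ob C. \<forall>z\<in>Ob C.
        Comp C (Assoc C w x (TensO C y z)) (Assoc C (TensO C w x) y z) =
        Comp C (TensA C (Idt C w) (Assoc C x y z))
          (Comp C (Assoc C w (TensO C x y) z) (TensA C (Assoc C w x y) (Idt C z))))"

definition semigroupal_functor :: "('o,'a,'x) scat_scheme \<Rightarrow> ('p,'b,'y) scat_scheme \<Rightarrow>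
    ('o \<Rightarrow> 'p) \<Rightarrow> ('a \<Rightarrow> 'b) \<Rightarrow> ('o \<Rightarrow> 'o \<Rightarrow> 'b) \<Rightarrow> bool" where
  "semigroupal_functor C D FO FA J \<longleftrightarrow>
     semigroupal_category C \<and> semigroupal_category D \<and> cat_functor C D FO FA \<and>
     (\<forall>x\<in>Ob C. \<forall>y\<in>Ob C. J x y \<in> hom D (TensO D (FO x) (FO y)) (FO (TensO C x y)) \<and>
        iso D (J x y)) \<and>
     (\<forall>f\<in>Ar C. \<forall>g\<in>Ar C.
        Comp D (J (Cod C f) (Cod C g)) (TensA D (FA f) (FA g)) =
        Comp D (FA (TensA C f g)) (J (Dom C f) (Dom C g))) \<and>
     \<comment> \<open>hexagon\<close>
     (\<forall>x\<in>Ob C. \<forall>y\<in>Ob C. \<forall>z\<in>Ob C.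
        Comp D (FA (Assoc C x y z))
          (Comp D (J (TensO C x y) z) (TensA D (J x y) (Idt D (FO z)))) =
        Comp D (J x (TensO C y z))
          (Comp D (TensA D (Idt D (FO x)) (J y z)) (Assoc D (FO x) (FO y) (FO z))))"

definition semigroupal_equivalence :: "('o,'a,'x) scat_scheme \<Rightarrow> ('p,'b,'y) scat_scheme \<Rightarrow>
    ('o \<Rightarrow> 'p) \<Rightarrow> ('a \<Rightarrow> 'b) \<Rightarrow> ('o \<Rightarrow> 'o \<Rightarrow> 'b) \<Rightarrow> bool" where
  "semigroupal_equivalence C D FO FA J \<longleftrightarrow>
     semigroupal_functor C D FO FA J \<and> cat_equivalence C D FO FA"

definition left_ideal :: "('o,'a,'x) scat_scheme \<Rightarrow> 'o set \<times> 'a set \<Rightarrow> bool" where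
  "left_ideal C I \<longleftrightarrow> subcategory C I \<and> iso_closed C I \<and>
     (\<forall>x\<in>fst I. \<forall>y\<in>Ob C. TensO C y x \<in> fst I)"

definition right_ideal :: "('o,'a,'x) scat_scheme \<Rightarrow> 'o set \<times> 'a set \<Rightarrow> bool" where
  "right_ideal C I \<longleftrightarrow> subcategory C I \<and> iso_closed C I \<and>
     (\<forall>x\<in>fst I. \<forall>y\<in>Ob C. TensO C x y \<in> fst I)"

definition two_sided_ideal :: "('o,'a,'x) scat_scheme \<Rightarrow> 'o set \<times> 'a set \<Rightarrow> bool" where
  "two_sided_ideal C I \<longleftrightarrow> left_ideal C I \<and> right_ideal C I"

end

theory Submission
  imports Defs
begin

lemma restrict_simps[simp]:
  "Ob (restrict_cat C S) = fst S" "Ar (restrict_cat C S) = snd S"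
  "Dom (restrict_cat C S) = Dom C" "Cod (restrict_cat C S) = Cod C"
  "Idt (restrict_cat C S) = Idt C" "Comp (restrict_cat C S) = Comp C"
  by (simp_all add: restrict_cat_def)

lemma iso_ar: "iso C f \<Longrightarrow> f \<in> Ar C" unfolding iso_def by blast

context
  fixes C :: "('o,'a,'x) cat_scheme"
  assumes cat: "category C"
begin

lemma cdom: "f \<in> Ar C \<Longrightarrow> Dom C f \<in> Ob C" using cat unfolding category_def by blast
lemma ccod: "f \<in> Ar C \<Longrightarrow> Cod C f \<in> Ob C" using cat unfolding category_def by blast
lemma cid: "x \<in> Ob C \<Longrightarrow> Idt C x \<in> Ar C \<and> Dom C (Idt C x) = x \<and> Cod C (Idt C x) = x"
  using cat unfolding category_def hom_def by blast
lemma ccomp: "f \<in> Ar C \<Longrightarrow> g \<in> Ar C \<Longrightarrow> Cod C f = Dom C g \<Longrightarrow>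
   Comp C g f \<in> Ar C \<and> Dom C (Comp C g f) = Dom C f \<and> Cod C (Comp C g f) = Cod C g"
  using cat unfolding category_def hom_def by blast
lemma cidr: "f \<in> Ar C \<Longrightarrow> Comp C f (Idt C (Dom C f)) = f"
  using cat unfolding category_def by blast
lemma cidl: "f \<in> Ar C \<Longrightarrow> Comp C (Idt C (Cod C f)) f = f"
  using cat unfolding category_def by blast
lemma cassoc: "f \<in> Ar C \<Longrightarrow> g \<in> Ar C \<Longrightarrow> h \<in> Ar C \<Longrightarrow> Cod C f = Dom C g \<Longrightarrow> Cod C g = Dom C h \<Longrightarrow>
        Comp C h (Comp C g f) = Comp C (Comp C h g) f"
  using cat unfolding category_def by blast

lemma iso_invE:
  assumes "iso C f"
  obtains g where "g \<in> Ar C" "Dom C g = Cod C f" "Cod C g = Dom C f"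
    "Comp C g f = Idt C (Dom C f)" "Comp C f g = Idt C (Cod C f)" "iso C g"
proof -
  obtain g where g: "g \<in> hom C (Cod C f) (Dom C f)" "Comp C g f = Idt C (Dom C f)" "Comp C f g = Idt C (Cod C f)"
    using assms unfolding iso_def by blast
  have "iso C g" using g assms unfolding iso_def hom_def by auto
  then show ?thesis using g that unfolding hom_def by blast
qed

lemma iso_solve:
  assumes "iso C e" "a \<in> Ar C" "Cod C e = Dom C a" "Comp C a e = b"
    "e' \<in> Ar C" "Dom C e' = Cod C e" "Cod C e' = Dom C e" "Comp C e e' = Idt C (Cod C e)"
  shows "a = Comp C b e'"
proof -
  have e: "e \<in> Ar C" using iso_ar[OF assms(1)] .
  have "Comp C b e' = Comp C a (Comp C e e')" using cassoc[OF assms(5) e assms(2)] assms by simp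
  also have "\<dots> = a" using assms cidr by simp
  finally show ?thesis by simp
qed

lemma iso_comp:
  assumes f: "iso C f" and g: "iso C g" and fg: "Cod C f = Dom C g"
  shows "iso C (Comp C g f)"
proof -
  obtain f' where f': "f' \<in> Ar C" "Dom C f' = Cod C f" "Cod C f' = Dom C f"
    "Comp C f' f = Idt C (Dom C f)" "Comp C f f' = Idt C (Cod C f)" using iso_invE[OF f] by blast
  obtain g' where g': "g' \<in> Ar C" "Dom C g' = Cod C g" "Cod C g' = Dom C g"
    "Comp C g' g = Idt C (Dom C g)" "Comp C g g' = Idt C (Cod C g)" using iso_invE[OF g] by blast
  have fa: "f \<in> Ar C" and ga: "g \<in> Ar C" using iso_ar[OF f] iso_ar[OF g] by auto
  have gf: "Comp C g f \<in> Ar C" "Dom C (Comp C g f) = Dom C f" "Cod C (Comp C g f) = Cod C g"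
    using ccomp[OF fa ga fg] by auto
  have fg': "Comp C f' g' \<in> Ar C" "Dom C (Comp C f' g') = Cod C g" "Cod C (Comp C f' g') = Dom C f"
    using ccomp[OF g'(1) f'(1)] g' f' fg by auto
  have "Comp C (Comp C f' g') (Comp C g f) = Comp C f' (Comp C g' (Comp C g f))"
    using cassoc[OF gf(1) g'(1) f'(1)] gf g' f' fg by metis
  also have "Comp C g' (Comp C g f) = Comp C (Comp C g' g) f"
    using cassoc[OF fa ga g'(1)] fg g' by simp
  also have "\<dots> = f" using g'(4) fg[symmetric] cidl[OF fa] by simp
  finally have 1: "Comp C (Comp C f' g') (Comp C g f) = Idt C (Dom C (Comp C g f))" using f' gf by simp
  have "Comp C (Comp C g f) (Comp C f' g') = Comp C g (Comp C f (Comp C f' g'))"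
    using cassoc[OF fg'(1) fa ga] fg' fg by metis
  also have "Comp C f (Comp C f' g') = Comp C (Comp C f f') g'"
    using cassoc[OF g'(1) f'(1) fa] f' g' fg by simp
  also have "\<dots> = g'" using f'(5) fg g'(3)[symmetric] cidl[OF g'(1)] by simp
  finally have 2: "Comp C (Comp C g f) (Comp C f' g') = Idt C (Cod C (Comp C g f))" using g' gf by simp
  show ?thesis unfolding iso_def hom_def using gf fg' 1 2 by auto
qed

lemma restrict_category: "subcategory C S \<Longrightarrow> category (restrict_cat C S)"
  using cat unfolding subcategory_def category_def hom_def by (simp add: subset_iff)

lemma iso_restrict:
  assumes "subcategory C S" "iso_closed C S" "Dom C f \<in> fst S" "iso C f"
  shows "iso (restrict_cat C S) f"
proof -
  obtain g where g: "g \<in> Ar C" "Dom C g = Cod C f" "Cod C g = Dom C f"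
    "Comp C g f = Idt C (Dom C f)" "Comp C f g = Idt C (Cod C f)" "iso C g" using iso_invE[OF assms(4)] by blast
  have "f \<in> snd S" "Cod C f \<in> fst S" using assms unfolding iso_closed_def by blast+
  moreover have "g \<in> snd S" using assms g calculation unfolding iso_closed_def by metis
  ultimately show ?thesis using g unfolding iso_def hom_def by auto
qed

end

lemma functor_iso:
  assumes F: "cat_functor C D FO FA" and f: "iso C f"
  shows "iso D (FA f)"
proof -
  have cC: "category C" and cD: "category D" using F unfolding cat_functor_def by auto
  obtain g where g: "g \<in> Ar C" "Dom C g = Cod C f" "Cod C g = Dom C f"
    "Comp C g f = Idt C (Dom C f)" "Comp C f g = Idt C (Cod C f)" using iso_invE[OF cC f] by blast
  have fa: "f \<in> Ar C" using iso_ar[OF f] .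
  have Ff: "FA f \<in> hom D (FO (Dom C f)) (FO (Cod C f))" and Fg: "FA g \<in> hom D (FO (Dom C g)) (FO (Cod C g))"
    using F fa g unfolding cat_functor_def by blast+
  have "Comp D (FA g) (FA f) = FA (Comp C g f)" using F fa g unfolding cat_functor_def by metis
  also have "\<dots> = Idt D (FO (Dom C f))" using g F fa cdom[OF cC] unfolding cat_functor_def by metis
  finally have 1: "Comp D (FA g) (FA f) = Idt D (Dom D (FA f))" using Ff unfolding hom_def by simp
  have "Comp D (FA f) (FA g) = FA (Comp C f g)" using F fa g unfolding cat_functor_def by metis
  also have "\<dots> = Idt D (FO (Cod C f))" using g F fa ccod[OF cC] unfolding cat_functor_def by metis
  finally have 2: "Comp D (FA f) (FA g) = Idt D (Cod D (FA f))" using Ff unfolding hom_def by simp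
  show ?thesis unfolding iso_def using Ff Fg 1 2 g unfolding hom_def by auto
qed

lemma functor_comp:
  assumes "cat_functor C D FO FA" "cat_functor D E GO GA"
  shows "cat_functor C E (GO \<circ> FO) (GA \<circ> FA)"
  using assms unfolding cat_functor_def hom_def
  by (smt (verit, ccfv_threshold) comp_apply mem_Collect_eq)

lemma functor_id: "category C \<Longrightarrow> cat_functor C C (\<lambda>x. x) (\<lambda>f. f)"
  unfolding cat_functor_def hom_def by auto

lemma functor_restrict:
  assumes "cat_functor C D FO FA" "subcategory C S" "subcategory D T"
    "\<And>x. x \<in> fst S \<Longrightarrow> FO x \<in> fst T" "\<And>f. f \<in> snd S \<Longrightarrow> FA f \<in> snd T"
  shows "cat_functor (restrict_cat C S) (restrict_cat D T) FO FA"
proof -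
  have cC: "category C" and cD: "category D" using assms unfolding cat_functor_def by auto
  show ?thesis using assms restrict_category[OF cC assms(2)] restrict_category[OF cD assms(3)]
    unfolding cat_functor_def hom_def subcategory_def by (simp add: subset_iff)
qed

lemma nat_iso_restrict:
  assumes "nat_iso C D F1O F1A F2O F2A \<eta>" "subcategory C S" "subcategory D T" "iso_closed D T"
    "\<And>x. x \<in> fst S \<Longrightarrow> F1O x \<in> fst T" "\<And>f. f \<in> snd S \<Longrightarrow> F1A f \<in> snd T"
    "\<And>x. x \<in> fst S \<Longrightarrow> F2O x \<in> fst T" "\<And>f. f \<in> snd S \<Longrightarrow> F2A f \<in> snd T"
  shows "nat_iso (restrict_cat C S) (restrict_cat D T) F1O F1A F2O F2A \<eta>"
proof -
  have cD: "category D" using assms(1) unfolding nat_iso_def cat_functor_def by auto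
  have f1: "cat_functor (restrict_cat C S) (restrict_cat D T) F1O F1A"
    using functor_restrict assms unfolding nat_iso_def by blast
  have f2: "cat_functor (restrict_cat C S) (restrict_cat D T) F2O F2A"
    using functor_restrict assms unfolding nat_iso_def by blast
  have "\<forall>x\<in>fst S. \<eta> x \<in> hom (restrict_cat D T) (F1O x) (F2O x) \<and> iso (restrict_cat D T) (\<eta> x)"
  proof
    fix x assume x: "x \<in> fst S"
    have xo: "x \<in> Ob C" using x assms(2) unfolding subcategory_def by blast
    have h: "\<eta> x \<in> hom D (F1O x) (F2O x)" "iso D (\<eta> x)" using assms(1) xo unfolding nat_iso_def by auto
    have "iso (restrict_cat D T) (\<eta> x)"
      using iso_restrict[OF cD assms(3,4)] h assms(5)[OF x] unfolding hom_def by auto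
    then show "\<eta> x \<in> hom (restrict_cat D T) (F1O x) (F2O x) \<and> iso (restrict_cat D T) (\<eta> x)"
      using h unfolding hom_def iso_def by auto
  qed
  then show ?thesis using f1 f2 assms(1,2) unfolding nat_iso_def subcategory_def by (auto simp: subset_iff)
qed


locale eqv =
  fixes C :: "('o,'a,'x) cat_scheme" and D :: "('p,'b,'y) cat_scheme"
    and FO :: "'o \<Rightarrow> 'p" and FA :: "'a \<Rightarrow> 'b" and GO :: "'p \<Rightarrow> 'o" and GA :: "'b \<Rightarrow> 'a"
    and \<eta> :: "'o \<Rightarrow> 'a" and \<epsilon> :: "'p \<Rightarrow> 'b" and I :: "'o set \<times> 'a set"
  assumes F: "cat_functor C D FO FA" and G: "cat_functor D C GO GA"
    and eta: "nat_iso C C (\<lambda>x. x) (\<lambda>f. f) (GO \<circ> FO) (GA \<circ> FA) \<eta>"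
    and eps: "nat_iso D D (FO \<circ> GO) (FA \<circ> GA) (\<lambda>x. x) (\<lambda>f. f) \<epsilon>"
    and subI: "subcategory C I" and isoI: "iso_closed C I"
begin

definition E where "E = ({X \<in> Ob D. GO X \<in> fst I}, {f \<in> Ar D. GA f \<in> snd I})"

lemma cC: "category C" and cD: "category D" using F unfolding cat_functor_def by auto

lemma Fo: "x \<in> Ob C \<Longrightarrow> FO x \<in> Ob D" using F unfolding cat_functor_def by blast
lemma Fa: "f \<in> Ar C \<Longrightarrow> FA f \<in> Ar D \<and> Dom D (FA f) = FO (Dom C f) \<and> Cod D (FA f) = FO (Cod C f)"
  using F unfolding cat_functor_def hom_def by blast
lemma Fid: "x \<in> Ob C \<Longrightarrow> FA (Idt C x) = Idt D (FO x)" using F unfolding cat_functor_def by blast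
lemma Fcomp: "f \<in> Ar C \<Longrightarrow> g \<in> Ar C \<Longrightarrow> Cod C f = Dom C g \<Longrightarrow> FA (Comp C g f) = Comp D (FA g) (FA f)"
  using F unfolding cat_functor_def by blast
lemma Go: "x \<in> Ob D \<Longrightarrow> GO x \<in> Ob C" using G unfolding cat_functor_def by blast
lemma Ga: "f \<in> Ar D \<Longrightarrow> GA f \<in> Ar C \<and> Dom C (GA f) = GO (Dom D f) \<and> Cod C (GA f) = GO (Cod D f)"
  using G unfolding cat_functor_def hom_def by blast
lemma Gid: "x \<in> Ob D \<Longrightarrow> GA (Idt D x) = Idt C (GO x)" using G unfolding cat_functor_def by blast
lemma Gcomp: "f \<in> Ar D \<Longrightarrow> g \<in> Ar D \<Longrightarrow> Cod D f = Dom D g \<Longrightarrow> GA (Comp D g f) = Comp C (GA g) (GA f)"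
  using G unfolding cat_functor_def by blast

lemma eta_x: "x \<in> Ob C \<Longrightarrow> \<eta> x \<in> Ar C \<and> Dom C (\<eta> x) = x \<and> Cod C (\<eta> x) = GO (FO x) \<and> iso C (\<eta> x)"
  using eta unfolding nat_iso_def hom_def by auto
lemma eta_nat: "f \<in> Ar C \<Longrightarrow> Comp C (\<eta> (Cod C f)) f = Comp C (GA (FA f)) (\<eta> (Dom C f))"
  using eta unfolding nat_iso_def by auto
lemma eps_x: "x \<in> Ob D \<Longrightarrow> \<epsilon> x \<in> Ar D \<and> Dom D (\<epsilon> x) = FO (GO x) \<and> Cod D (\<epsilon> x) = x \<and> iso D (\<epsilon> x)"
  using eps unfolding nat_iso_def hom_def by auto
lemma eps_nat: "f \<in> Ar D \<Longrightarrow> Comp D (\<epsilon> (Cod D f)) (FA (GA f)) = Comp D f (\<epsilon> (Dom D f))"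
  using eps unfolding nat_iso_def by auto

lemma I_ob: "x \<in> fst I \<Longrightarrow> x \<in> Ob C" using subI unfolding subcategory_def by blast
lemma I_ar: "f \<in> snd I \<Longrightarrow> f \<in> Ar C \<and> Dom C f \<in> fst I \<and> Cod C f \<in> fst I"
  using subI unfolding subcategory_def by blast
lemma I_comp: "f \<in> snd I \<Longrightarrow> g \<in> snd I \<Longrightarrow> Cod C f = Dom C g \<Longrightarrow> Comp C g f \<in> snd I"
  using subI unfolding subcategory_def by blast
lemma I_iso: "x \<in> fst I \<Longrightarrow> iso C \<phi> \<Longrightarrow> Dom C \<phi> = x \<Longrightarrow> Cod C \<phi> \<in> fst I \<and> \<phi> \<in> snd I"
  using isoI unfolding iso_closed_def by blast

lemma image_ob: "x \<in> fst I \<Longrightarrow> FO x \<in> fst E"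
proof -
  assume x: "x \<in> fst I"
  have "GO (FO x) \<in> fst I" using I_iso[OF x, of "\<eta> x"] eta_x[OF I_ob[OF x]] by simp
  then show ?thesis using Fo[OF I_ob[OF x]] unfolding E_def by simp
qed

lemma image_ar: "\<phi> \<in> snd I \<Longrightarrow> FA \<phi> \<in> snd E"
proof -
  assume p: "\<phi> \<in> snd I"
  let ?X = "Dom C \<phi>" and ?Y = "Cod C \<phi>"
  have pa: "\<phi> \<in> Ar C" "?X \<in> fst I" "?Y \<in> fst I" using I_ar[OF p] by auto
  have eX: "\<eta> ?X \<in> Ar C" "Dom C (\<eta> ?X) = ?X" "Cod C (\<eta> ?X) = GO (FO ?X)" "iso C (\<eta> ?X)"
    using eta_x I_ob pa by auto
  have eY: "\<eta> ?Y \<in> Ar C" "Dom C (\<eta> ?Y) = ?Y" "Cod C (\<eta> ?Y) = GO (FO ?Y)" "iso C (\<eta> ?Y)"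
    using eta_x I_ob pa by auto
  obtain e' where e': "e' \<in> Ar C" "Dom C e' = Cod C (\<eta> ?X)" "Cod C e' = Dom C (\<eta> ?X)"
    "Comp C e' (\<eta> ?X) = Idt C (Dom C (\<eta> ?X))" "Comp C (\<eta> ?X) e' = Idt C (Cod C (\<eta> ?X))" "iso C e'"
    using iso_invE[OF cC eX(4)] by blast
  have GFp: "GA (FA \<phi>) \<in> Ar C" "Dom C (GA (FA \<phi>)) = GO (FO ?X)" "Cod C (GA (FA \<phi>)) = GO (FO ?Y)"
    using Ga Fa pa by auto
  have eq: "GA (FA \<phi>) = Comp C (Comp C (\<eta> ?Y) \<phi>) e'"
    using iso_solve[OF cC eX(4) GFp(1) _ eta_nat[OF pa(1), symmetric] e'(1-3,5)] eX GFp by simp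
  have i1: "\<eta> ?Y \<in> snd I" "\<eta> ?X \<in> snd I" using I_iso[OF pa(3), of "\<eta> ?Y"] I_iso[OF pa(2), of "\<eta> ?X"] eX eY by simp_all
  have GFX: "GO (FO ?X) \<in> fst I" using I_iso[OF pa(2), of "\<eta> ?X"] eX by simp
  have i2: "e' \<in> snd I" using I_iso[OF GFX e'(6)] e' eX by simp
  have "Comp C (\<eta> ?Y) \<phi> \<in> snd I" using I_comp[OF p i1(1)] eY by simp
  then have "Comp C (Comp C (\<eta> ?Y) \<phi>) e' \<in> snd I"
    using I_comp[OF i2] ccomp[OF cC pa(1) eY(1)] eY e' eX by simp
  then show ?thesis using eq Fa[OF pa(1)] unfolding E_def by simp
qed

lemma E_sub: "subcategory D E"
  unfolding subcategory_def
proof (intro conjI ballI impI)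
  show "fst E \<subseteq> Ob D" "snd E \<subseteq> Ar D" unfolding E_def by auto
next
  fix f assume f: "f \<in> snd E"
  then have fa: "f \<in> Ar D" "GA f \<in> snd I" unfolding E_def by auto
  show "Dom D f \<in> fst E" "Cod D f \<in> fst E"
    using fa I_ar[OF fa(2)] Ga[OF fa(1)] cdom[OF cD] ccod[OF cD] unfolding E_def by auto
next
  fix x assume "x \<in> fst E"
  then have x: "x \<in> Ob D" "GO x \<in> fst I" unfolding E_def by auto
  have "Idt C (GO x) \<in> snd I" using subI x unfolding subcategory_def by blast
  then show "Idt D x \<in> snd E" using Gid[OF x(1)] cid[OF cD x(1)] unfolding E_def by simp
next
  fix f g assume a: "f \<in> snd E" "g \<in> snd E" and fg: "Cod D f = Dom D g"
  have fa: "f \<in> Ar D" "GA f \<in> snd I" and ga: "g \<in> Ar D" "GA g \<in> snd I" using a unfolding E_def by auto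
  have "Comp C (GA g) (GA f) \<in> snd I" using I_comp[OF fa(2) ga(2)] Ga[OF fa(1)] Ga[OF ga(1)] fg by simp
  then show "Comp D g f \<in> snd E" using Gcomp[OF fa(1) ga(1) fg] ccomp[OF cD fa(1) ga(1) fg] unfolding E_def by simp
qed

lemma E_iso: "iso_closed D E"
  unfolding iso_closed_def
proof (intro ballI allI impI)
  fix x \<phi> assume x: "x \<in> fst E" and p: "iso D \<phi> \<and> Dom D \<phi> = x"
  have pa: "\<phi> \<in> Ar D" using iso_ar[of D \<phi>] p by blast
  have "iso C (GA \<phi>)" using functor_iso[OF G] p by blast
  moreover have "GO x \<in> fst I" using x unfolding E_def by auto
  ultimately have "Cod C (GA \<phi>) \<in> fst I \<and> GA \<phi> \<in> snd I" using I_iso[of "GO x" "GA \<phi>"] Ga[OF pa] p by simp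
  then show "Cod D \<phi> \<in> fst E \<and> \<phi> \<in> snd E" using Ga[OF pa] pa ccod[OF cD pa] unfolding E_def by simp
qed

lemma E_min:
  assumes "subcategory D E'" "iso_closed D E'" "fst (image_subcat FO FA I) \<subseteq> fst E'"
    "snd (image_subcat FO FA I) \<subseteq> snd E'"
  shows "fst E \<subseteq> fst E'" "snd E \<subseteq> snd E'"
proof -
  have imo: "\<And>x. x \<in> fst I \<Longrightarrow> FO x \<in> fst E'" using assms(3) unfolding image_subcat_def by auto
  have ima: "\<And>f. f \<in> snd I \<Longrightarrow> FA f \<in> snd E'" using assms(4) unfolding image_subcat_def by auto
  have E'iso: "\<And>x \<phi>. x \<in> fst E' \<Longrightarrow> iso D \<phi> \<Longrightarrow> Dom D \<phi> = x \<Longrightarrow> Cod D \<phi> \<in> fst E' \<and> \<phi> \<in> snd E'"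
    using assms(2) unfolding iso_closed_def by blast
  have E'comp: "\<And>f g. f \<in> snd E' \<Longrightarrow> g \<in> snd E' \<Longrightarrow> Cod D f = Dom D g \<Longrightarrow> Comp D g f \<in> snd E'"
    using assms(1) unfolding subcategory_def by blast
  have ob: "X \<in> fst E'" if X: "X \<in> Ob D" "GO X \<in> fst I" for X
    using E'iso[OF imo[OF X(2)], of "\<epsilon> X"] eps_x[OF X(1)] by simp
  show "fst E \<subseteq> fst E'" using ob unfolding E_def by auto
  show "snd E \<subseteq> snd E'"
  proof
    fix f assume "f \<in> snd E"
    then have fa: "f \<in> Ar D" "GA f \<in> snd I" unfolding E_def by auto
    let ?X = "Dom D f" and ?Y = "Cod D f"
    have XY: "?X \<in> Ob D" "?Y \<in> Ob D" using cdom[OF cD fa(1)] ccod[OF cD fa(1)] by auto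
    have GXY: "GO ?X \<in> fst I" "GO ?Y \<in> fst I" using I_ar[OF fa(2)] Ga[OF fa(1)] by auto
    have eX: "\<epsilon> ?X \<in> Ar D" "Dom D (\<epsilon> ?X) = FO (GO ?X)" "Cod D (\<epsilon> ?X) = ?X" "iso D (\<epsilon> ?X)"
      using eps_x XY by auto
    have eY: "\<epsilon> ?Y \<in> Ar D" "Dom D (\<epsilon> ?Y) = FO (GO ?Y)" "Cod D (\<epsilon> ?Y) = ?Y" "iso D (\<epsilon> ?Y)"
      using eps_x XY by auto
    obtain e' where e': "e' \<in> Ar D" "Dom D e' = Cod D (\<epsilon> ?X)" "Cod D e' = Dom D (\<epsilon> ?X)"
      "Comp D e' (\<epsilon> ?X) = Idt D (Dom D (\<epsilon> ?X))" "Comp D (\<epsilon> ?X) e' = Idt D (Cod D (\<epsilon> ?X))" "iso D e'"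
      using iso_invE[OF cD eX(4)] by blast
    have FG: "FA (GA f) \<in> Ar D" "Dom D (FA (GA f)) = FO (GO ?X)" "Cod D (FA (GA f)) = FO (GO ?Y)"
      using Ga Fa fa by auto
    have eq: "f = Comp D (Comp D (\<epsilon> ?Y) (FA (GA f))) e'"
      using iso_solve[OF cD eX(4) fa(1) _ eps_nat[OF fa(1), symmetric] e'(1-3,5)] eX by simp
    have s1: "e' \<in> snd E'" using E'iso[OF ob[OF XY(1) GXY(1)] e'(6)] e' eX by simp
    have s2: "\<epsilon> ?Y \<in> snd E'" using E'iso[OF imo[OF GXY(2)] eY(4)] eY by simp
    have s3: "FA (GA f) \<in> snd E'" using ima fa by blast
    have "Comp D (\<epsilon> ?Y) (FA (GA f)) \<in> snd E'" using E'comp[OF s3 s2] FG eY by simp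
    then have "Comp D (Comp D (\<epsilon> ?Y) (FA (GA f))) e' \<in> snd E'"
      using E'comp[OF s1] ccomp[OF cD FG(1) eY(1)] FG eY e' eX by simp
    then show "f \<in> snd E'" using eq by simp
  qed
qed

lemma image_le: "fst (image_subcat FO FA I) \<subseteq> fst E" "snd (image_subcat FO FA I) \<subseteq> snd E"
  using image_ob image_ar unfolding image_subcat_def by auto

lemma closure_eq: "iso_closure D (image_subcat FO FA I) = E"
proof -
  let ?P = "\<lambda>E'. subcategory D E' \<and> iso_closed D E' \<and> fst (image_subcat FO FA I) \<subseteq> fst E' \<and> snd (image_subcat FO FA I) \<subseteq> snd E'"
  have PE: "?P E" using E_sub E_iso image_le by blast
  have 1: "\<Inter>{fst E' | E'. ?P E'} = fst E"
  proof (rule antisym)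
    show "\<Inter>{fst E' | E'. ?P E'} \<subseteq> fst E" using PE by blast
    show "fst E \<subseteq> \<Inter>{fst E' | E'. ?P E'}" using E_min by blast
  qed
  have 2: "\<Inter>{snd E' | E'. ?P E'} = snd E"
  proof (rule antisym)
    show "\<Inter>{snd E' | E'. ?P E'} \<subseteq> snd E" using PE by blast
    show "snd E \<subseteq> \<Inter>{snd E' | E'. ?P E'}" using E_min by blast
  qed
  show ?thesis unfolding iso_closure_def using 1 2 by simp
qed

lemma E_ob_iso: "z \<in> fst I \<Longrightarrow> iso D \<mu> \<Longrightarrow> Dom D \<mu> = FO z \<Longrightarrow> Cod D \<mu> \<in> fst E"
  using E_iso image_ob unfolding iso_closed_def by blast

lemma restr_equiv: "cat_equivalence (restrict_cat C I) (restrict_cat D E) FO FA"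
proof -
  have Fr: "cat_functor (restrict_cat C I) (restrict_cat D E) FO FA"
    by (rule functor_restrict[OF F subI E_sub]) (simp_all add: image_ob image_ar)
  have Gr: "cat_functor (restrict_cat D E) (restrict_cat C I) GO GA"
    by (rule functor_restrict[OF G E_sub subI]) (simp_all add: E_def)
  have er: "nat_iso (restrict_cat C I) (restrict_cat C I) (\<lambda>x. x) (\<lambda>f. f) (GO \<circ> FO) (GA \<circ> FA) \<eta>"
  proof (rule nat_iso_restrict[OF eta subI subI isoI])
    fix x assume "x \<in> fst I" then show "(GO \<circ> FO) x \<in> fst I" using image_ob[of x] unfolding E_def by simp
  next
    fix f assume "f \<in> snd I" then show "(GA \<circ> FA) f \<in> snd I" using image_ar[of f] unfolding E_def by simp
  qed
  have pr: "nat_iso (restrict_cat D E) (restrict_cat D E) (FO \<circ> GO) (FA \<circ> GA) (\<lambda>x. x) (\<lambda>f. f) \<epsilon>"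
  proof (rule nat_iso_restrict[OF eps E_sub E_sub E_iso])
    fix x assume "x \<in> fst E" then show "(FO \<circ> GO) x \<in> fst E" using image_ob[of "GO x"] unfolding E_def by simp
  next
    fix f assume "f \<in> snd E" then show "(FA \<circ> GA) f \<in> snd E" using image_ar[of "GA f"] unfolding E_def by simp
  qed
  show ?thesis unfolding cat_equivalence_def using Fr Gr er pr by blast
qed

end


lemma tens_iso:
  fixes D :: "('p,'b,'z) scat_scheme"
  assumes sD: "semigroupal_category D" and f: "iso D f" and g: "iso D g"
  shows "iso D (TensA D f g)"
proof -
  have cD: "category D" using sD unfolding semigroupal_category_def by blast
  obtain f' where f': "f' \<in> Ar D" "Dom D f' = Cod D f" "Cod D f' = Dom D f"
    "Comp D f' f = Idt D (Dom D f)" "Comp D f f' = Idt D (Cod D f)" using iso_invE[OF cD f] by blast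
  obtain g' where g': "g' \<in> Ar D" "Dom D g' = Cod D g" "Cod D g' = Dom D g"
    "Comp D g' g = Idt D (Dom D g)" "Comp D g g' = Idt D (Cod D g)" using iso_invE[OF cD g] by blast
  have fa: "f \<in> Ar D" and ga: "g \<in> Ar D" using iso_ar[OF f] iso_ar[OF g] by auto
  have T: "\<And>a b. a \<in> Ar D \<Longrightarrow> b \<in> Ar D \<Longrightarrow> TensA D a b \<in> hom D (TensO D (Dom D a) (Dom D b)) (TensO D (Cod D a) (Cod D b))"
    using sD unfolding semigroupal_category_def by blast
  have TI: "\<And>x y. x \<in> Ob D \<Longrightarrow> y \<in> Ob D \<Longrightarrow> TensA D (Idt D x) (Idt D y) = Idt D (TensO D x y)"
    using sD unfolding semigroupal_category_def by blast
  have TC: "\<And>a b a' b'. a \<in> Ar D \<Longrightarrow> b \<in> Ar D \<Longrightarrow> a' \<in> Ar D \<Longrightarrow> b' \<in> Ar D \<Longrightarrow> Cod D a = Dom D b \<Longrightarrow> Cod D a' = Dom D b' \<Longrightarrow>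
        TensA D (Comp D b a) (Comp D b' a') = Comp D (TensA D b b') (TensA D a a')"
    using sD unfolding semigroupal_category_def by blast
  have 1: "Comp D (TensA D f' g') (TensA D f g) = Idt D (TensO D (Dom D f) (Dom D g))"
    using TC[OF fa f'(1) ga g'(1)] f' g' TI cdom[OF cD fa] cdom[OF cD ga] by simp
  have 2: "Comp D (TensA D f g) (TensA D f' g') = Idt D (TensO D (Cod D f) (Cod D g))"
    using TC[OF f'(1) fa g'(1) ga] f' g' TI ccod[OF cD fa] ccod[OF cD ga] by simp
  show ?thesis unfolding iso_def using T[OF fa ga] T[OF f'(1) g'(1)] f' g' 1 2 unfolding hom_def by auto
qed

lemma E_tens:
  fixes D :: "('p,'b,'z) scat_scheme"
  assumes e: "eqv C D FO FA GO GA \<eta> \<epsilon> I" and sD: "semigroupal_category D"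
    and A: "A \<in> Ob D" and B: "B \<in> Ob D" and z: "z \<in> fst I"
    and j: "iso D j" "Dom D j = TensO D (FO (GO A)) (FO (GO B))" "Cod D j = FO z"
  shows "TensO D A B \<in> fst (eqv.E D GO GA I)"
proof -
  interpret eqv C D FO FA GO GA \<eta> \<epsilon> I by (rule e)
  obtain j' where j': "j' \<in> Ar D" "Dom D j' = Cod D j" "Cod D j' = Dom D j" "iso D j'"
    using iso_invE[OF cD j(1)] by blast
  have eA: "\<epsilon> A \<in> Ar D" "Dom D (\<epsilon> A) = FO (GO A)" "Cod D (\<epsilon> A) = A" "iso D (\<epsilon> A)" using eps_x A by auto
  have eB: "\<epsilon> B \<in> Ar D" "Dom D (\<epsilon> B) = FO (GO B)" "Cod D (\<epsilon> B) = B" "iso D (\<epsilon> B)" using eps_x B by auto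
  have T: "TensA D (\<epsilon> A) (\<epsilon> B) \<in> hom D (TensO D (FO (GO A)) (FO (GO B))) (TensO D A B)"
    using sD eA eB unfolding semigroupal_category_def by metis
  have Ti: "iso D (TensA D (\<epsilon> A) (\<epsilon> B))" using tens_iso[OF sD eA(4) eB(4)] .
  have mu: "iso D (Comp D (TensA D (\<epsilon> A) (\<epsilon> B)) j')"
    using iso_comp[OF cD j'(4) Ti] T j' j unfolding hom_def by simp
  have "Dom D (Comp D (TensA D (\<epsilon> A) (\<epsilon> B)) j') = FO z" "Cod D (Comp D (TensA D (\<epsilon> A) (\<epsilon> B)) j') = TensO D A B"
    using ccomp[OF cD j'(1), of "TensA D (\<epsilon> A) (\<epsilon> B)"] T j' j unfolding hom_def by auto
  then show ?thesis using E_ob_iso[OF z mu] by simp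
qed


theorem lemma2p10:
  fixes C :: "('o,'a) scat" and C' :: "('p,'b) scat"
    and FO :: "'o \<Rightarrow> 'p" and FA :: "'a \<Rightarrow> 'b" and J :: "'o \<Rightarrow> 'o \<Rightarrow> 'b"
    and I :: "'o set \<times> 'a set"
  assumes "semigroupal_equivalence C C' FO FA J"
  shows "(left_ideal C I \<longrightarrow> left_ideal C' (iso_closure C' (image_subcat FO FA I))) \<and>
         (right_ideal C I \<longrightarrow> right_ideal C' (iso_closure C' (image_subcat FO FA I))) \<and>
         (two_sided_ideal C I \<longrightarrow> two_sided_ideal C' (iso_closure C' (image_subcat FO FA I))) \<and>
         ((left_ideal C I \<or> right_ideal C I) \<longrightarrow>
            cat_equivalence (restrict_cat C I)
              (restrict_cat C' (iso_closure C' (image_subcat FO FA I))) FO FA)"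
proof -
  have sf: "semigroupal_functor C C' FO FA J" and ce: "cat_equivalence C C' FO FA"
    using assms unfolding semigroupal_equivalence_def by auto
  have sC: "semigroupal_category C" and sD: "semigroupal_category C'"
    using sf unfolding semigroupal_functor_def by auto
  have Jp: "\<And>x y. x \<in> Ob C \<Longrightarrow> y \<in> Ob C \<Longrightarrow> iso C' (J x y) \<and> Dom C' (J x y) = TensO C' (FO x) (FO y)
      \<and> Cod C' (J x y) = FO (TensO C x y)"
    using sf unfolding semigroupal_functor_def hom_def by blast
  obtain GO GA \<eta> \<epsilon> where F: "cat_functor C C' FO FA" and G: "cat_functor C' C GO GA"
    and eta: "nat_iso C C (\<lambda>x. x) (\<lambda>f. f) (GO \<circ> FO) (GA \<circ> FA) \<eta>"
    and eps: "nat_iso C' C' (FO \<circ> GO) (FA \<circ> GA) (\<lambda>x. x) (\<lambda>f. f) \<epsilon>"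
    using ce unfolding cat_equivalence_def by blast
  have Go: "\<And>x. x \<in> Ob C' \<Longrightarrow> GO x \<in> Ob C" using G unfolding cat_functor_def by blast
  have main: "left_ideal C' (iso_closure C' (image_subcat FO FA I))"
    if L: "left_ideal C I" for I
  proof -
    have e: "eqv C C' FO FA GO GA \<eta> \<epsilon> I"
      using L F G eta eps unfolding left_ideal_def eqv_def by blast
    interpret eqv C C' FO FA GO GA \<eta> \<epsilon> I by (rule e)
    have "TensO C' Y X \<in> fst E" if X: "X \<in> fst E" and Y: "Y \<in> Ob C'" for X Y
    proof -
      have Xo: "X \<in> Ob C'" "GO X \<in> fst I" using X unfolding E_def by auto
      have z: "TensO C (GO Y) (GO X) \<in> fst I" using L Xo Go[OF Y] unfolding left_ideal_def by blast
      show ?thesis using E_tens[OF e sD Y Xo(1) z] Jp[OF Go[OF Y] I_ob[OF Xo(2)]] by blast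
    qed
    then show ?thesis unfolding closure_eq left_ideal_def using E_sub E_iso by blast
  qed
  have mainr: "right_ideal C' (iso_closure C' (image_subcat FO FA I))"
    if L: "right_ideal C I" for I
  proof -
    have e: "eqv C C' FO FA GO GA \<eta> \<epsilon> I"
      using L F G eta eps unfolding right_ideal_def eqv_def by blast
    interpret eqv C C' FO FA GO GA \<eta> \<epsilon> I by (rule e)
    have "TensO C' X Y \<in> fst E" if X: "X \<in> fst E" and Y: "Y \<in> Ob C'" for X Y
    proof -
      have Xo: "X \<in> Ob C'" "GO X \<in> fst I" using X unfolding E_def by auto
      have z: "TensO C (GO X) (GO Y) \<in> fst I" using L Xo Go[OF Y] unfolding right_ideal_def by blast
      show ?thesis using E_tens[OF e sD Xo(1) Y z] Jp[OF I_ob[OF Xo(2)] Go[OF Y]] by blast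
    qed
    then show ?thesis unfolding closure_eq right_ideal_def using E_sub E_iso by blast
  qed
  have eqvp: "cat_equivalence (restrict_cat C I) (restrict_cat C' (iso_closure C' (image_subcat FO FA I))) FO FA"
    if L: "left_ideal C I \<or> right_ideal C I"
  proof -
    have e: "eqv C C' FO FA GO GA \<eta> \<epsilon> I"
      using L F G eta eps unfolding left_ideal_def right_ideal_def eqv_def by blast
    interpret eqv C C' FO FA GO GA \<eta> \<epsilon> I by (rule e)
    show ?thesis unfolding closure_eq using restr_equiv .
  qed
  show ?thesis using main mainr eqvp unfolding two_sided_ideal_def by blast
qed

end
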